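(* Let $A\in\mathscr R$ be fixed and let $V_1,V_2$ be distributions supported in $[0,\infty)^d$. Suppose $V_1\in\mathcal S_A$ and $V_2(xA)=o[V_1(xA)]$. Then $V_1*V_2(xA)\sim V_1(xA)$ as $x\to\infty$, and $V_1*V_2\in\mathcal S_A$.
   Context: $\mathscr R$: open, increasing ($\mathbf z\in A,\mathbf y\in[0,\infty)^d\Rightarrow\mathbf z+\mathbf y\in A$) sets $A\subsetneq\mathbb R^d$ with convex complement and $\mathbf 0\notin\overline A$. For $V$ on $[0,\infty)^d$, $\mathbf Z\sim V$: $V(xA)=\mathbf P(\mathbf Z\in xA)$, $V_A$ the distribution of $\sup\{u:\mathbf Z\in uA\}$; $V\in\mathcal S_A$ iff $V_A$ is subexponential ($\overline{V_A^{n*}}(x)\sim n\overline{V_A}(x)$, $n\ge2$). $V_1*V_2$ is the distribution of $\mathbf Z^{(1)}+\mathbf Z^{(2)}$ for independent $\mathbf Z^{(i)}\sim V_i$, and $V_1*V_2\in\mathcal S_A$ means $(V_1*V_2)_A$ is subexponential. *)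

theory Defs
  imports "HOL-Probability.Probability" "HOL-Library.Landau_Symbols"
begin

definition orthant :: "(real ^ 'd) set" where
  "orthant = {z. \<forall>i. 0 \<le> z $ i}"

definition increasing_set :: "(real ^ 'd) set \<Rightarrow> bool" where
  "increasing_set A \<longleftrightarrow> (\<forall>z\<in>A. \<forall>y\<in>orthant. z + y \<in> A)"

definition class_R :: "(real ^ 'd) set \<Rightarrow> bool" where
  "class_R A \<longleftrightarrow> open A \<and> increasing_set A \<and> A \<noteq> UNIV \<and> convex (- A) \<and> 0 \<notin> closure A"

definition distr_orthant :: "(real ^ 'd) measure \<Rightarrow> bool" where
  "distr_orthant V \<longleftrightarrow> prob_space V \<and> sets V = sets borel \<and> emeasure V (- orthant) = 0"

definition conv :: "('a::euclidean_space) measure \<Rightarrow> 'a measure \<Rightarrow> 'a measure" where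
  "conv M N = distr (M \<Otimes>\<^sub>M N) borel (\<lambda>(x, y). x + y)"

fun conv_pow :: "('a::euclidean_space) measure \<Rightarrow> nat \<Rightarrow> 'a measure" where
  "conv_pow F 0 = return borel 0"
| "conv_pow F (Suc n) = conv F (conv_pow F n)"

definition radial_sup :: "(real ^ 'd) set \<Rightarrow> real ^ 'd \<Rightarrow> real" where
  "radial_sup A z = (if {u. 0 < u \<and> z \<in> (\<lambda>a. u *\<^sub>R a) ` A} = {} then 0
                     else Sup {u. 0 < u \<and> z \<in> (\<lambda>a. u *\<^sub>R a) ` A})"

definition V_A :: "(real ^ 'd) set \<Rightarrow> (real ^ 'd) measure \<Rightarrow> real measure" where
  "V_A A V = distr V borel (radial_sup A)"

definition tail :: "real measure \<Rightarrow> real \<Rightarrow> real" where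
  "tail F x = measure F {x<..}"

definition subexponential :: "real measure \<Rightarrow> bool" where
  "subexponential F \<longleftrightarrow> prob_space F \<and> sets F = sets borel \<and> emeasure F {..<0} = 0 \<and>
     (\<forall>x. tail F x > 0) \<and>
     (\<forall>n\<ge>2. (\<lambda>x. tail (conv_pow F n) x) \<sim>[at_top] (\<lambda>x. real n * tail F x))"

definition S_A :: "(real ^ 'd) set \<Rightarrow> (real ^ 'd) measure \<Rightarrow> bool" where
  "S_A A V \<longleftrightarrow> subexponential (V_A A V)"

end

theory Submission
  imports Defs
begin


definition nice :: "real measure \<Rightarrow> bool" where
  "nice G \<longleftrightarrow> prob_space G \<and> sets G = sets borel \<and> emeasure G {..<0} = 0"

lemma nice_prob: "nice G \<Longrightarrow> prob_space G" by (simp add: nice_def)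
lemma nice_sets: "nice G \<Longrightarrow> sets G = sets borel" by (simp add: nice_def)
lemma nice_space: "nice G \<Longrightarrow> space G = UNIV"
  using sets_eq_imp_space_eq[OF nice_sets] by simp

lemma nice_borel: "nice G \<Longrightarrow> S \<in> sets borel \<Longrightarrow> S \<in> sets G" by (simp add: nice_sets)

lemma nice_meas_nonneg:
  assumes "nice G" "S \<in> sets borel"
  shows "measure G (S \<inter> {0..}) = measure G S"
proof -
  interpret prob_space G using assms nice_prob by blast
  have n: "measure G {..<0} = 0" using assms by (simp add: nice_def measure_def)
  have s1: "S \<inter> {0..} \<in> sets G" "S \<inter> {..<0} \<in> sets G" "{..<0::real} \<in> sets G"
    using assms by (simp_all add: nice_sets)
  have e: "S = (S \<inter> {0..}) \<union> (S \<inter> {..<0})" by auto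
  have "measure G S = measure G (S \<inter> {0..}) + measure G (S \<inter> {..<0})"
    apply (subst e) apply (rule finite_measure_Union) using s1 by auto
  moreover have "measure G (S \<inter> {..<0}) \<le> measure G {..<0}"
    using s1 by (intro finite_measure_mono) auto
  ultimately show ?thesis using n measure_nonneg[of G "S \<inter> {..<0}"] by linarith
qed

lemma tail_nonneg: "0 \<le> tail G x" by (simp add: tail_def)
lemma tail_le1: "nice G \<Longrightarrow> tail G x \<le> 1"
  unfolding tail_def using nice_prob prob_space.prob_le_1 by blast
lemma tail_mono: "nice G \<Longrightarrow> x \<le> y \<Longrightarrow> tail G y \<le> tail G x"
proof -
  assume a: "nice G" "x \<le> y"
  interpret prob_space G using a nice_prob by blast
  show ?thesis unfolding tail_def using a by (intro finite_measure_mono) (auto simp: nice_sets)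
qed

lemma compl_tail: "nice G \<Longrightarrow> measure G {..x} = 1 - tail G x"
proof -
  assume a: "nice G"
  interpret prob_space G using a nice_prob by blast
  have "measure G ({..x} \<union> {x<..}) = measure G {..x} + tail G x"
    unfolding tail_def using a by (intro finite_measure_Union) (auto simp: nice_sets)
  moreover have "{..x} \<union> {x<..} = space G" using a nice_space by auto
  ultimately show ?thesis using prob_space by simp
qed

lemma interval_tail: "nice G \<Longrightarrow> a \<le> b \<Longrightarrow> measure G {a<..b} = tail G a - tail G b"
proof -
  assume a: "nice G" "a \<le> b"
  interpret prob_space G using a nice_prob by blast
  have "measure G ({a<..b} \<union> {b<..}) = measure G {a<..b} + tail G b"
    unfolding tail_def using a by (intro finite_measure_Union) (auto simp: nice_sets)
  moreover have "{a<..b} \<union> {b<..} = {a<..}" using a by auto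
  ultimately show ?thesis unfolding tail_def by simp
qed

lemma tail_neg: "nice G \<Longrightarrow> x < 0 \<Longrightarrow> tail G x = 1"
proof -
  assume a: "nice G" "x < 0"
  have "tail G x = measure G ({x<..} \<inter> {0..})" unfolding tail_def using nice_meas_nonneg[OF a(1)] by simp
  also have "{x<..} \<inter> {0..} = {0..}" using a by auto
  also have "measure G {0..} = measure G (UNIV \<inter> {0..})" by simp
  also have "\<dots> = 1" using nice_meas_nonneg[OF a(1), of UNIV] nice_space[OF a(1)] prob_space.prob_space[OF nice_prob[OF a(1)]] by simp
  finally show ?thesis .
qed

lemma tail_lim0: "nice G \<Longrightarrow> (tail G \<longlongrightarrow> 0) at_top"
proof -
  assume a: "nice G"
  interpret prob_space G using a nice_prob by blast
  have "(\<lambda>n. measure G {real n<..}) \<longlonglongrightarrow> measure G (\<Inter>n. {real n<..})"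
    using a by (intro finite_Lim_measure_decseq) (auto simp: nice_sets decseq_def)
  moreover have "(\<Inter>n. {real n<..}) = {}"
    using reals_Archimedean2 by (auto, meson less_asym)
  ultimately have s: "(\<lambda>n. tail G (real n)) \<longlonglongrightarrow> 0" by (simp add: tail_def)
  show ?thesis
  proof (rule order_tendstoI)
    fix e :: real assume "e < 0" then show "eventually (\<lambda>x. e < tail G x) at_top"
      using tail_nonneg[of G] by (intro always_eventually allI) (meson less_le_trans)
  next
    fix e :: real assume "0 < e"
    then obtain N where N: "\<And>n. n \<ge> N \<Longrightarrow> tail G (real n) < e"
      using s order_tendstoD(2)[OF s] by (auto simp: eventually_sequentially)
    show "eventually (\<lambda>x. tail G x < e) at_top"
      unfolding eventually_at_top_linorder
      by (rule exI[of _ "real N"]) (meson N a le_less_trans order_refl tail_mono)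
  qed
qed

lemma pair_sets: "nice G \<Longrightarrow> nice H \<Longrightarrow> sets (G \<Otimes>\<^sub>M H) = sets (borel :: (real \<times> real) measure)"
  by (simp add: nice_sets borel_prod[symmetric] cong: sets_pair_measure_cong)

lemma pair_prob: "nice G \<Longrightarrow> nice H \<Longrightarrow> prob_space (G \<Otimes>\<^sub>M H)"
  by (simp add: nice_prob prob_space_pair)

lemma rect: assumes "nice G" "nice H" "A \<in> sets borel" "B \<in> sets borel"
  shows "measure (G \<Otimes>\<^sub>M H) (A \<times> B) = measure G A * measure H B"
proof -
  interpret H: prob_space H using assms nice_prob by blast
  interpret G: prob_space G using assms nice_prob by blast
  show ?thesis using H.emeasure_pair_measure_Times[of A G B] assms
    by (simp add: nice_sets measure_def enn2real_mult)
qed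



lemma pair_sets2: "nice G \<Longrightarrow> nice H \<Longrightarrow> sets (G \<Otimes>\<^sub>M H) = sets (borel \<Otimes>\<^sub>M borel :: (real \<times> real) measure)"
  by (simp add: nice_sets cong: sets_pair_measure_cong)

lemma pair_space: "nice G \<Longrightarrow> nice H \<Longrightarrow> space (G \<Otimes>\<^sub>M H) = UNIV"
  by (simp add: space_pair_measure nice_space)

lemma pset: "nice G \<Longrightarrow> nice H \<Longrightarrow> S \<in> sets (borel \<Otimes>\<^sub>M borel) \<Longrightarrow> S \<in> sets (G \<Otimes>\<^sub>M H)"
  by (simp add: pair_sets2)

lemma sum_meas: "(\<lambda>(x, y). x + y) \<in> measurable (G \<Otimes>\<^sub>M H) (borel :: real measure)" if "nice G" "nice H"
  using that by (subst measurable_cong_sets[OF pair_sets2[OF that] refl]) measurable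

lemma sumset: "{p::real\<times>real. x < fst p + snd p} \<in> sets (borel \<Otimes>\<^sub>M borel)"
proof -
  have "{p::real\<times>real. x < fst p + snd p} = {p \<in> space (borel \<Otimes>\<^sub>M borel). x < fst p + snd p}"
    by (simp add: space_pair_measure)
  also have "\<dots> \<in> sets (borel \<Otimes>\<^sub>M borel)" by measurable
  finally show ?thesis .
qed

lemma conv_tail: "nice G \<Longrightarrow> nice H \<Longrightarrow> tail (conv G H) x = measure (G \<Otimes>\<^sub>M H) {p. x < fst p + snd p}"
  unfolding tail_def conv_def
  by (subst measure_distr[OF sum_meas]) (auto simp: pair_space intro!: arg_cong[where f="measure _"])

lemma pset_pred: "nice G \<Longrightarrow> nice H \<Longrightarrow> {p \<in> space (borel \<Otimes>\<^sub>M borel). P p} \<in> sets (borel \<Otimes>\<^sub>M borel) \<Longrightarrow> {p. P p} \<in> sets (G \<Otimes>\<^sub>M H)"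
  by (simp add: pair_sets2 space_pair_measure)

lemma nice_conv: assumes "nice G" "nice H" shows "nice (conv G H)"
proof -
  interpret P: prob_space "G \<Otimes>\<^sub>M H" using pair_prob assms by blast
  have pr: "prob_space (conv G H)" unfolding conv_def
    by (rule P.prob_space_distr[OF sum_meas[OF assms]])
  have st: "sets (conv G H) = sets borel" unfolding conv_def by simp
  have "emeasure (conv G H) {..<0} = emeasure (G \<Otimes>\<^sub>M H) {p. fst p + snd p < 0}"
    unfolding conv_def
    by (subst emeasure_distr[OF sum_meas[OF assms]]) (auto simp: pair_space[OF assms] intro!: arg_cong[where f="emeasure _"])
  also have "\<dots> = ennreal (measure (G \<Otimes>\<^sub>M H) {p. fst p + snd p < 0})"
    by (simp add: P.emeasure_eq_measure)
  also have "measure (G \<Otimes>\<^sub>M H) {p. fst p + snd p < 0} = 0"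
  proof -
    have s1: "{..<0} \<times> UNIV \<in> sets (G \<Otimes>\<^sub>M H)" "UNIV \<times> {..<0} \<in> sets (G \<Otimes>\<^sub>M H)"
      using assms by (auto simp: nice_sets)
    have "measure (G \<Otimes>\<^sub>M H) {p. fst p + snd p < 0} \<le> measure (G \<Otimes>\<^sub>M H) ({..<0} \<times> UNIV \<union> UNIV \<times> {..<0})"
      using s1 by (intro P.finite_measure_mono) auto
    also have "\<dots> \<le> measure (G \<Otimes>\<^sub>M H) ({..<0} \<times> UNIV) + measure (G \<Otimes>\<^sub>M H) (UNIV \<times> {..<0})"
      using s1 by (intro measure_Un_le) auto
    also have "\<dots> = 0" using assms rect[OF assms, of "{..<0}" UNIV] rect[OF assms, of UNIV "{..<0}"]
      by (simp add: nice_def measure_def)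
    finally show ?thesis using measure_nonneg[of "G \<Otimes>\<^sub>M H"] by (meson order.antisym)
  qed
  finally show ?thesis using pr st by (simp add: nice_def)
qed

lemma nice_return: "nice (return borel (0::real))"
  unfolding nice_def by (auto intro: prob_space_return)

lemma conv_return: assumes "nice G" shows "conv G (return borel 0) = G"
proof (rule measure_eqI)
  show "sets (conv G (return borel 0)) = sets G" using assms by (simp add: conv_def nice_sets)
next
  fix A assume A: "A \<in> sets (conv G (return borel 0))"
  then have Ab: "A \<in> sets borel" by (simp add: conv_def)
  interpret R: prob_space "return borel (0::real)" by (rule prob_space_return) simp
  let ?P = "(\<lambda>(x, y). x + y) -` A \<inter> space (G \<Otimes>\<^sub>M return borel 0)"
  have Ps: "?P \<in> sets (G \<Otimes>\<^sub>M return borel 0)"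
    using sum_meas[OF assms nice_return] Ab by (rule measurable_sets)
  have "emeasure (conv G (return borel 0)) A = emeasure (G \<Otimes>\<^sub>M return borel 0) ?P"
    unfolding conv_def using Ab by (subst emeasure_distr[OF sum_meas[OF assms nice_return]]) auto
  also have "\<dots> = (\<integral>\<^sup>+x. emeasure (return borel 0) (Pair x -` ?P) \<partial>G)"
    by (rule R.emeasure_pair_measure_alt[OF Ps])
  also have "\<dots> = (\<integral>\<^sup>+x. indicator A x \<partial>G)"
  proof (rule nn_integral_cong)
    fix x
    have "emeasure (return borel 0) (Pair x -` ?P) = indicator (Pair x -` ?P) 0"
      by (intro emeasure_return) (use sets_Pair1[OF Ps, of x] in simp)
    then show "emeasure (return borel 0) (Pair x -` ?P) = indicator A x"
      using assms by (simp add: indicator_def pair_space[OF assms nice_return])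
  qed
  also have "\<dots> = emeasure G A" using Ab assms by (simp add: nice_sets)
  finally show "emeasure (conv G (return borel 0)) A = emeasure G A" .
qed

lemma cmp1:
  assumes "nice F" "nice G" "nice H" "S \<in> sets (borel \<Otimes>\<^sub>M borel)" "S' \<in> sets (borel \<Otimes>\<^sub>M borel)" "0 \<le> K"
    and le: "\<And>y. measure G {t. (t, y) \<in> S} \<le> K * measure F {t. (t, y) \<in> S'}"
  shows "measure (G \<Otimes>\<^sub>M H) S \<le> K * measure (F \<Otimes>\<^sub>M H) S'"
proof -
  interpret GH: pair_prob_space G H using assms by (simp add: nice_prob pair_prob_space_def pair_sigma_finite_def prob_space_imp_sigma_finite)
  interpret FH: pair_prob_space F H using assms by (simp add: nice_prob pair_prob_space_def pair_sigma_finite_def prob_space_imp_sigma_finite)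
  have S1: "S \<in> sets (G \<Otimes>\<^sub>M H)" "S' \<in> sets (F \<Otimes>\<^sub>M H)" using assms by (simp_all add: pair_sets2)
  have "emeasure (G \<Otimes>\<^sub>M H) S = (\<integral>\<^sup>+y. emeasure G ((\<lambda>x. (x, y)) -` S) \<partial>H)"
    by (rule GH.emeasure_pair_measure_alt2[OF S1(1)])
  also have "\<dots> \<le> (\<integral>\<^sup>+y. ennreal K * emeasure F ((\<lambda>x. (x, y)) -` S') \<partial>H)"
  proof (rule nn_integral_mono)
    fix y
    have "ennreal (measure G {t. (t, y) \<in> S}) \<le> ennreal (K * measure F {t. (t, y) \<in> S'})"
      using le by (rule ennreal_leI)
    then show "emeasure G ((\<lambda>x. (x, y)) -` S) \<le> ennreal K * emeasure F ((\<lambda>x. (x, y)) -` S')"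
      using assms by (simp add: GH.M1.emeasure_eq_measure FH.M1.emeasure_eq_measure vimage_def ennreal_mult)
  qed
  also have "\<dots> = ennreal K * (\<integral>\<^sup>+y. emeasure F ((\<lambda>x. (x, y)) -` S') \<partial>H)"
    by (rule nn_integral_cmult) (rule FH.measurable_emeasure_Pair2[OF S1(2)])
  also have "\<dots> = ennreal K * emeasure (F \<Otimes>\<^sub>M H) S'"
    by (simp add: FH.emeasure_pair_measure_alt2[OF S1(2)])
  finally have "ennreal (measure (G \<Otimes>\<^sub>M H) S) \<le> ennreal (K * measure (F \<Otimes>\<^sub>M H) S')"
    using assms by (simp add: GH.P.emeasure_eq_measure FH.P.emeasure_eq_measure ennreal_mult)
  then show ?thesis using assms by (simp add: ennreal_le_iff)
qed



lemma cmp2: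
  assumes "nice F" "nice G" "nice H" "S \<in> sets (borel \<Otimes>\<^sub>M borel)" "S' \<in> sets (borel \<Otimes>\<^sub>M borel)" "0 \<le> K"
    and le: "\<And>x. measure H {t. (x, t) \<in> S} \<le> K * measure F {t. (x, t) \<in> S'}"
  shows "measure (G \<Otimes>\<^sub>M H) S \<le> K * measure (G \<Otimes>\<^sub>M F) S'"
proof -
  interpret GH: pair_prob_space G H using assms by (simp add: nice_prob pair_prob_space_def pair_sigma_finite_def prob_space_imp_sigma_finite)
  interpret GF: pair_prob_space G F using assms by (simp add: nice_prob pair_prob_space_def pair_sigma_finite_def prob_space_imp_sigma_finite)
  have S1: "S \<in> sets (G \<Otimes>\<^sub>M H)" "S' \<in> sets (G \<Otimes>\<^sub>M F)" using assms by (simp_all add: pair_sets2)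
  have "emeasure (G \<Otimes>\<^sub>M H) S = (\<integral>\<^sup>+x. emeasure H (Pair x -` S) \<partial>G)"
    by (rule GH.M2.emeasure_pair_measure_alt[OF S1(1)])
  also have "\<dots> \<le> (\<integral>\<^sup>+x. ennreal K * emeasure F (Pair x -` S') \<partial>G)"
  proof (rule nn_integral_mono)
    fix x
    have "ennreal (measure H {t. (x, t) \<in> S}) \<le> ennreal (K * measure F {t. (x, t) \<in> S'})"
      using le by (rule ennreal_leI)
    then show "emeasure H (Pair x -` S) \<le> ennreal K * emeasure F (Pair x -` S')"
      using assms by (simp add: GH.M2.emeasure_eq_measure GF.M2.emeasure_eq_measure vimage_def ennreal_mult)
  qed
  also have "\<dots> = ennreal K * (\<integral>\<^sup>+x. emeasure F (Pair x -` S') \<partial>G)"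
    by (rule nn_integral_cmult) (rule GF.measurable_emeasure_Pair1[OF S1(2)])
  also have "\<dots> = ennreal K * emeasure (G \<Otimes>\<^sub>M F) S'"
    by (simp add: GF.M2.emeasure_pair_measure_alt[OF S1(2)])
  finally have "ennreal (measure (G \<Otimes>\<^sub>M H) S) \<le> ennreal (K * measure (G \<Otimes>\<^sub>M F) S')"
    using assms by (simp add: GH.P.emeasure_eq_measure GF.P.emeasure_eq_measure ennreal_mult)
  then show ?thesis using assms by (simp add: ennreal_le_iff)
qed

lemma meas_UNIV: "nice G \<Longrightarrow> measure G UNIV = 1"
  using prob_space.prob_space[OF nice_prob] nice_space by metis

lemma meas_nonneg_half: "nice G \<Longrightarrow> measure G {0..} = 1"
  using nice_meas_nonneg[of G UNIV] meas_UNIV by simp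

lemma meas_0v: "nice G \<Longrightarrow> measure G {0..v} = 1 - tail G v"
proof -
  assume a: "nice G"
  have "{..v} \<inter> {0..} = {0..v}" by auto
  then show ?thesis using nice_meas_nonneg[OF a, of "{..v}"] compl_tail[OF a] by simp
qed

lemma rect_tail: "nice G \<Longrightarrow> nice H \<Longrightarrow> measure (G \<Otimes>\<^sub>M H) ({a<..} \<times> UNIV) = tail G a"
  using rect[of G H "{a<..}" UNIV] meas_UNIV[of H] by (simp add: tail_def)
lemma rect_tail2: "nice G \<Longrightarrow> nice H \<Longrightarrow> measure (G \<Otimes>\<^sub>M H) (UNIV \<times> {a<..}) = tail H a"
  using rect[of G H UNIV "{a<..}"] meas_UNIV[of G] by (simp add: tail_def)

lemma three_union:
  assumes "prob_space M" "A \<in> sets M" "B \<in> sets M" "C \<in> sets M" "A \<inter> B = {}" "A \<inter> C = {}" "B \<inter> C = {}"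
  shows "measure M (A \<union> B \<union> C) = measure M A + measure M B + measure M C"
proof -
  interpret prob_space M by fact
  have "measure M (A \<union> B \<union> C) = measure M (A \<union> B) + measure M C"
    using assms by (intro finite_measure_Union) auto
  also have "measure M (A \<union> B) = measure M A + measure M B"
    using assms by (intro finite_measure_Union) auto
  finally show ?thesis .
qed

definition Mset :: "real \<Rightarrow> real \<Rightarrow> (real \<times> real) set" where
  "Mset x v = {p. x < fst p + snd p \<and> v < fst p \<and> fst p \<le> x - v}"

lemma Mset_sets: "Mset x v \<in> sets (borel \<Otimes>\<^sub>M borel)"
proof -
  have "Mset x v = {p \<in> space (borel \<Otimes>\<^sub>M borel). x < fst p + snd p \<and> v < fst p \<and> fst p \<le> x - v}"
    by (simp add: space_pair_measure Mset_def)
  also have "\<dots> \<in> sets (borel \<Otimes>\<^sub>M borel)" by measurable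
  finally show ?thesis .
qed

lemma LT_ineq:
  assumes nF: "nice F" and v: "0 \<le> v" "v \<le> x"
  shows "tail F x * (2 - tail F v) + (tail F v - tail F x) * tail F (x - v) \<le> tail (conv F F) x"
proof -
  let ?P = "F \<Otimes>\<^sub>M F"
  have pp: "prob_space ?P" using pair_prob nF by blast
  let ?E1 = "{x<..} \<times> {0..}" and ?E2 = "{0..v} \<times> {x<..}" and ?E3 = "{v<..x} \<times> {x-v<..}"
  have s: "?E1 \<in> sets ?P" "?E2 \<in> sets ?P" "?E3 \<in> sets ?P" using nF by (auto simp: nice_sets)
  have "measure ?P (?E1 \<union> ?E2 \<union> ?E3) = measure ?P ?E1 + measure ?P ?E2 + measure ?P ?E3"
    using v by (intro three_union[OF pp s]) auto
  also have "measure ?P ?E1 = tail F x"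
    using rect[OF nF nF, of "{x<..}" "{0..}"] meas_nonneg_half[OF nF] by (simp add: tail_def)
  also have "measure ?P ?E2 = (1 - tail F v) * tail F x"
    using rect[OF nF nF, of "{0..v}" "{x<..}"] meas_0v[OF nF] by (simp add: tail_def)
  also have "measure ?P ?E3 = (tail F v - tail F x) * tail F (x - v)"
    using rect[OF nF nF, of "{v<..x}" "{x-v<..}"] interval_tail[OF nF v(2)] by (simp add: tail_def)
  finally have eq: "measure ?P (?E1 \<union> ?E2 \<union> ?E3) = tail F x + (1 - tail F v) * tail F x + (tail F v - tail F x) * tail F (x - v)" .
  have "measure ?P (?E1 \<union> ?E2 \<union> ?E3) \<le> measure ?P {p. x < fst p + snd p}"
    using v by (intro finite_measure.finite_measure_mono pset[OF nF nF sumset])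
      (auto simp: prob_space_def[symmetric] pp intro: prob_space.axioms pp)
  then show ?thesis using eq conv_tail[OF nF nF, of x] by (simp add: algebra_simps)
qed

lemma MB_ineq:
  assumes nF: "nice F" and v: "0 \<le> v" "v \<le> x"
  shows "tail F x * (2 - tail F v) + measure (F \<Otimes>\<^sub>M F) (Mset x v) \<le> tail (conv F F) x"
proof -
  let ?P = "F \<Otimes>\<^sub>M F"
  have pp: "prob_space ?P" using pair_prob nF by blast
  let ?E1 = "{x<..} \<times> {0..}" and ?E2 = "{0..v} \<times> {x<..}" and ?E3 = "Mset x v"
  have s: "?E1 \<in> sets ?P" "?E2 \<in> sets ?P" "?E3 \<in> sets ?P" using nF pset[OF nF nF Mset_sets] by (auto simp: nice_sets)
  have "measure ?P (?E1 \<union> ?E2 \<union> ?E3) = measure ?P ?E1 + measure ?P ?E2 + measure ?P ?E3"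
    using v by (intro three_union[OF pp s]) (auto simp: Mset_def)
  also have "measure ?P ?E1 = tail F x"
    using rect[OF nF nF, of "{x<..}" "{0..}"] meas_nonneg_half[OF nF] by (simp add: tail_def)
  also have "measure ?P ?E2 = (1 - tail F v) * tail F x"
    using rect[OF nF nF, of "{0..v}" "{x<..}"] meas_0v[OF nF] by (simp add: tail_def)
  finally have eq: "measure ?P (?E1 \<union> ?E2 \<union> ?E3) = tail F x + (1 - tail F v) * tail F x + measure ?P ?E3" .
  have "measure ?P (?E1 \<union> ?E2 \<union> ?E3) \<le> measure ?P {p. x < fst p + snd p}"
    using v by (intro finite_measure.finite_measure_mono pset[OF nF nF sumset])
      (auto simp: Mset_def intro: prob_space.axioms pp)
  then show ?thesis using eq conv_tail[OF nF nF, of x] by (simp add: algebra_simps)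
qed

lemma LB_ineq:
  assumes nG: "nice G" and nH: "nice H" and x: "0 \<le> x"
  shows "tail G x + (1 - tail G x) * tail H x \<le> tail (conv G H) x"
proof -
  let ?P = "G \<Otimes>\<^sub>M H"
  have pp: "prob_space ?P" using pair_prob nG nH by blast
  interpret prob_space ?P by fact
  let ?E1 = "{x<..} \<times> {0..}" and ?E2 = "{0..x} \<times> {x<..}"
  have s: "?E1 \<in> sets ?P" "?E2 \<in> sets ?P" using nG nH by (auto simp: nice_sets)
  have "measure ?P (?E1 \<union> ?E2) = measure ?P ?E1 + measure ?P ?E2"
    by (intro finite_measure_Union s) auto
  also have "measure ?P ?E1 = tail G x"
    using rect[OF nG nH, of "{x<..}" "{0..}"] meas_nonneg_half[OF nH] by (simp add: tail_def)
  also have "measure ?P ?E2 = (1 - tail G x) * tail H x"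
    using rect[OF nG nH, of "{0..x}" "{x<..}"] meas_0v[OF nG] by (simp add: tail_def)
  finally have eq: "measure ?P (?E1 \<union> ?E2) = tail G x + (1 - tail G x) * tail H x" .
  have "measure ?P (?E1 \<union> ?E2) \<le> measure ?P {p. x < fst p + snd p}"
    using x by (intro finite_measure_mono pset[OF nG nH sumset]) auto
  then show ?thesis using eq conv_tail[OF nG nH, of x] by simp
qed



lemma UB_ineq:
  assumes nF: "nice F" and nG: "nice G" and nH: "nice H" and v: "0 \<le> v" "v \<le> x"
    and K: "0 \<le> K1" "0 \<le> K2"
    and hG: "\<And>t. v \<le> t \<Longrightarrow> tail G t \<le> K1 * tail F t"
    and hH: "\<And>t. v \<le> t \<Longrightarrow> tail H t \<le> K2 * tail F t"
  shows "tail (conv G H) x \<le> tail G (x - v) + tail H (x - v) + K1 * (K2 * measure (F \<Otimes>\<^sub>M F) (Mset x v) + tail F (x - v) * tail H v)"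
proof -
  define S where "S = {p::real\<times>real. x < fst p + snd p \<and> v < fst p \<and> fst p \<le> x - v \<and> v < snd p \<and> snd p \<le> x - v}"
  define S' where "S' = {p::real\<times>real. x < fst p + snd p \<and> v < snd p \<and> snd p \<le> x - v}"
  have Ss: "S \<in> sets (borel \<Otimes>\<^sub>M borel)"
  proof -
    have "S = {p \<in> space (borel \<Otimes>\<^sub>M borel). x < fst p + snd p \<and> v < fst p \<and> fst p \<le> x - v \<and> v < snd p \<and> snd p \<le> x - v}"
      by (simp add: space_pair_measure S_def)
    also have "\<dots> \<in> sets (borel \<Otimes>\<^sub>M borel)" by measurable
    finally show ?thesis .
  qed
  have Ss': "S' \<in> sets (borel \<Otimes>\<^sub>M borel)"
  proof -
    have "S' = {p \<in> space (borel \<Otimes>\<^sub>M borel). x < fst p + snd p \<and> v < snd p \<and> snd p \<le> x - v}"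
      by (simp add: space_pair_measure S'_def)
    also have "\<dots> \<in> sets (borel \<Otimes>\<^sub>M borel)" by measurable
    finally show ?thesis .
  qed
  interpret GH: prob_space "G \<Otimes>\<^sub>M H" using pair_prob nG nH by blast
  interpret FH: prob_space "F \<Otimes>\<^sub>M H" using pair_prob nF nH by blast
  have step1: "measure (G \<Otimes>\<^sub>M H) S \<le> K1 * measure (F \<Otimes>\<^sub>M H) S'"
  proof (rule cmp1[OF nF nG nH Ss Ss' K(1)])
    fix y
    show "measure G {t. (t, y) \<in> S} \<le> K1 * measure F {t. (t, y) \<in> S'}"
    proof (cases "v < y \<and> y \<le> x - v")
      case True
      have "measure G {t. (t, y) \<in> S} \<le> measure G {x - y<..}"
        using nG by (intro finite_measure.finite_measure_mono prob_space.axioms nice_prob)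
          (auto simp: S_def nice_sets)
      also have "\<dots> \<le> K1 * tail F (x - y)" using hG[of "x - y"] True by (simp add: tail_def)
      also have "{t. (t, y) \<in> S'} = {x - y<..}" using True by (auto simp: S'_def)
      ultimately show ?thesis by (simp add: tail_def)
    next
      case False
      then have "{t. (t, y) \<in> S} = {}" by (auto simp: S_def)
      then show ?thesis using K by simp
    qed
  qed
  have step2: "measure (F \<Otimes>\<^sub>M H) S \<le> K2 * measure (F \<Otimes>\<^sub>M F) (Mset x v)"
  proof (rule cmp2[OF nF nF nH Ss Mset_sets K(2)])
    fix s
    show "measure H {t. (s, t) \<in> S} \<le> K2 * measure F {t. (s, t) \<in> Mset x v}"
    proof (cases "v < s \<and> s \<le> x - v")
      case True
      have "measure H {t. (s, t) \<in> S} \<le> measure H {x - s<..}"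
        using nH by (intro finite_measure.finite_measure_mono prob_space.axioms nice_prob)
          (auto simp: S_def nice_sets)
      also have "\<dots> \<le> K2 * tail F (x - s)" using hH[of "x - s"] True by (simp add: tail_def)
      also have "{t. (s, t) \<in> Mset x v} = {x - s<..}" using True by (auto simp: Mset_def)
      ultimately show ?thesis by (simp add: tail_def)
    next
      case False
      then have "{t. (s, t) \<in> S} = {}" by (auto simp: S_def)
      then show ?thesis using K by simp
    qed
  qed
  have S2s: "{x - v<..} \<times> {v<..} \<in> sets (F \<Otimes>\<^sub>M H)" using nF nH by (simp add: nice_sets)
  have step3: "measure (F \<Otimes>\<^sub>M H) S' \<le> measure (F \<Otimes>\<^sub>M H) S + measure (F \<Otimes>\<^sub>M H) ({x - v<..} \<times> {v<..})"
  proof -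
    have "measure (F \<Otimes>\<^sub>M H) S' \<le> measure (F \<Otimes>\<^sub>M H) (S \<union> ({x - v<..} \<times> {v<..}))"
      using pset[OF nF nH Ss] S2s by (intro FH.finite_measure_mono) (auto simp: S_def S'_def)
    also have "\<dots> \<le> measure (F \<Otimes>\<^sub>M H) S + measure (F \<Otimes>\<^sub>M H) ({x - v<..} \<times> {v<..})"
      using pset[OF nF nH Ss] S2s by (intro measure_Un_le) auto
    finally show ?thesis .
  qed
  have r3: "measure (F \<Otimes>\<^sub>M H) ({x - v<..} \<times> {v<..}) = tail F (x - v) * tail H v"
    using rect[OF nF nH, of "{x - v<..}" "{v<..}"] by (simp add: tail_def)
  have A1: "{x - v<..} \<times> UNIV \<in> sets (G \<Otimes>\<^sub>M H)" "UNIV \<times> {x - v<..} \<in> sets (G \<Otimes>\<^sub>M H)"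
    using nG nH by (simp_all add: nice_sets)
  have SGs: "S \<in> sets (G \<Otimes>\<^sub>M H)" using pset[OF nG nH Ss] .
  have "tail (conv G H) x = measure (G \<Otimes>\<^sub>M H) {p. x < fst p + snd p}" by (rule conv_tail[OF nG nH])
  also have "\<dots> \<le> measure (G \<Otimes>\<^sub>M H) (({x - v<..} \<times> UNIV \<union> UNIV \<times> {x - v<..}) \<union> S)"
    using A1 SGs by (intro GH.finite_measure_mono) (auto simp: S_def)
  also have "\<dots> \<le> measure (G \<Otimes>\<^sub>M H) ({x - v<..} \<times> UNIV \<union> UNIV \<times> {x - v<..}) + measure (G \<Otimes>\<^sub>M H) S"
    using A1 SGs by (intro measure_Un_le) auto
  also have "measure (G \<Otimes>\<^sub>M H) ({x - v<..} \<times> UNIV \<union> UNIV \<times> {x - v<..}) \<le> tail G (x - v) + tail H (x - v)"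
    using measure_Un_le[OF A1] rect_tail[OF nG nH] rect_tail2[OF nG nH] by simp
  finally show ?thesis
    using step1 step2 step3 r3 K
    by (smt (verit, best) mult_left_mono)
qed



lemma shiftlim: "(f \<longlongrightarrow> c) at_top \<Longrightarrow> ((\<lambda>x::real. f (x - v)) \<longlongrightarrow> c) at_top"
proof -
  assume a: "(f \<longlongrightarrow> c) at_top"
  have "filterlim (\<lambda>x::real. - v + x) at_top at_top"
    by (rule filterlim_tendsto_add_at_top[OF tendsto_const filterlim_ident])
  then have "filterlim (\<lambda>x::real. x - v) at_top at_top" by simp
  then show ?thesis using filterlim_compose[OF a] by blast
qed

lemma LT:
  assumes nF: "nice F" and pos: "\<And>x. 0 < tail F x"
    and sub2: "((\<lambda>x. tail (conv F F) x / tail F x) \<longlongrightarrow> 2) at_top" and v: "0 \<le> v"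
  shows "((\<lambda>x. tail F (x - v) / tail F x) \<longlongrightarrow> 1) at_top"
proof (rule tendsto_sandwich[where f="\<lambda>_. 1" and h="\<lambda>x. (tail (conv F F) x / tail F x - 2 + tail F v) / (tail F v - tail F x)"])
  have ev1: "eventually (\<lambda>x. tail F x < tail F v) at_top"
    using order_tendstoD(2)[OF tail_lim0[OF nF] pos[of v]] .
  show "eventually (\<lambda>x. 1 \<le> tail F (x - v) / tail F x) at_top"
    using pos tail_mono[OF nF, of "x - v" x for x] v by (auto simp: le_divide_eq)
  show "eventually (\<lambda>x. tail F (x - v) / tail F x \<le> (tail (conv F F) x / tail F x - 2 + tail F v) / (tail F v - tail F x)) at_top"
    using ev1 eventually_ge_at_top[of v]
  proof eventually_elim
    case (elim x)
    have i: "tail F x * (2 - tail F v) + (tail F v - tail F x) * tail F (x - v) \<le> tail (conv F F) x"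
      using LT_ineq[OF nF v elim(2)] .
    have p: "0 < tail F x" "0 < tail F v - tail F x" using pos elim by auto
    have "tail F (x - v) / tail F x * (tail F v - tail F x) \<le> tail (conv F F) x / tail F x - 2 + tail F v"
    proof -
      have e1: "tail F (x - v) / tail F x * (tail F v - tail F x) = ((tail F v - tail F x) * tail F (x - v)) / tail F x"
        by simp
      have e2: "tail (conv F F) x / tail F x - 2 + tail F v = (tail (conv F F) x - tail F x * (2 - tail F v)) / tail F x"
        using p by (simp add: field_simps)
      have "(tail F v - tail F x) * tail F (x - v) \<le> tail (conv F F) x - tail F x * (2 - tail F v)"
        using i by linarith
      then show ?thesis unfolding e1 e2 using p by (intro divide_right_mono) auto
    qed
    then show ?case using p by (simp add: le_divide_eq)
  qed
  show "((\<lambda>_. 1) \<longlongrightarrow> (1::real)) at_top" by simp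
  have "((\<lambda>x. (tail (conv F F) x / tail F x - 2 + tail F v) / (tail F v - tail F x)) \<longlongrightarrow> (2 - 2 + tail F v) / (tail F v - 0)) at_top"
    using pos[of v] by (intro tendsto_intros sub2 tail_lim0[OF nF]) auto
  then show "((\<lambda>x. (tail (conv F F) x / tail F x - 2 + tail F v) / (tail F v - tail F x)) \<longlongrightarrow> 1) at_top"
    using pos[of v] by simp
qed



lemma KEY:
  assumes nF: "nice F" and pos: "\<And>x. 0 < tail F x"
    and sub2: "((\<lambda>x. tail (conv F F) x / tail F x) \<longlongrightarrow> 2) at_top"
    and nG: "nice G" and nH: "nice H" and c: "0 \<le> c1" "0 \<le> c2"
    and hG: "((\<lambda>x. tail G x / tail F x) \<longlongrightarrow> c1) at_top"
    and hH: "((\<lambda>x. tail H x / tail F x) \<longlongrightarrow> c2) at_top"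
  shows "((\<lambda>x. tail (conv G H) x / tail F x) \<longlongrightarrow> c1 + c2) at_top"
proof (rule order_tendstoI)
  fix a assume a: "a < c1 + c2"
  have "((\<lambda>x. tail G x / tail F x + tail H x / tail F x - tail G x * (tail H x / tail F x)) \<longlongrightarrow> c1 + c2 - 0 * c2) at_top"
    by (intro tendsto_intros hG hH tail_lim0[OF nG])
  then have "eventually (\<lambda>x. a < tail G x / tail F x + tail H x / tail F x - tail G x * (tail H x / tail F x)) at_top"
    using a by (intro order_tendstoD(1)) auto
  then show "eventually (\<lambda>x. a < tail (conv G H) x / tail F x) at_top"
    using eventually_ge_at_top[of 0]
  proof eventually_elim
    case (elim x)
    have "tail G x + (1 - tail G x) * tail H x \<le> tail (conv G H) x" using LB_ineq[OF nG nH elim(2)] .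
    then have "(tail G x + (1 - tail G x) * tail H x) / tail F x \<le> tail (conv G H) x / tail F x"
      using pos[of x] by (intro divide_right_mono) auto
    moreover have "(tail G x + (1 - tail G x) * tail H x) / tail F x = tail G x / tail F x + tail H x / tail F x - tail G x * (tail H x / tail F x)"
      using pos[of x] by (simp add: field_simps)
    ultimately show ?case using elim(1) by linarith
  qed
next
  fix a assume a: "c1 + c2 < a"
  define d where "d = a - (c1 + c2)"
  have d: "0 < d" using a d_def by simp
  define K1 where "K1 = c1 + 1"
  define K2 where "K2 = c2 + 1"
  have K: "0 \<le> K1" "0 \<le> K2" using c by (simp_all add: K1_def K2_def)
  obtain x1 where x1: "\<And>t. t \<ge> x1 \<Longrightarrow> tail G t / tail F t < K1"
    using order_tendstoD(2)[OF hG, of K1] by (auto simp: K1_def eventually_at_top_linorder)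
  obtain x2 where x2: "\<And>t. t \<ge> x2 \<Longrightarrow> tail H t / tail F t < K2"
    using order_tendstoD(2)[OF hH, of K2] by (auto simp: K2_def eventually_at_top_linorder)
  have "((\<lambda>v. K1 * K2 * tail F v + K1 * tail H v) \<longlongrightarrow> K1 * K2 * 0 + K1 * 0) at_top"
    by (intro tendsto_intros tail_lim0 nF nH)
  then have "eventually (\<lambda>v. K1 * K2 * tail F v + K1 * tail H v < d / 2) at_top"
    using d by (intro order_tendstoD(2)) auto
  then have "eventually (\<lambda>v. K1 * K2 * tail F v + K1 * tail H v < d / 2 \<and> v \<ge> max 0 (max x1 x2)) at_top"
    by (intro eventually_conj eventually_ge_at_top)
  then obtain v where v: "K1 * K2 * tail F v + K1 * tail H v < d / 2" "v \<ge> max 0 (max x1 x2)"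
    unfolding eventually_at_top_linorder by auto
  have v0: "0 \<le> v" using v by simp
  have bG: "\<And>t. v \<le> t \<Longrightarrow> tail G t \<le> K1 * tail F t"
    using x1 v pos by (auto simp: divide_less_eq intro: less_imp_le)
  have bH: "\<And>t. v \<le> t \<Longrightarrow> tail H t \<le> K2 * tail F t"
    using x2 v pos by (auto simp: divide_less_eq intro: less_imp_le)
  define q where "q x = tail F (x - v) / tail F x" for x
  define U where "U x = tail G (x - v) / tail F (x - v) * q x + tail H (x - v) / tail F (x - v) * q x
      + K1 * (K2 * (tail (conv F F) x / tail F x - 2 + tail F v) + q x * tail H v)" for x
  have qlim: "(q \<longlongrightarrow> 1) at_top" unfolding q_def by (rule LT[OF nF pos sub2 v0])
  have "(U \<longlongrightarrow> c1 * 1 + c2 * 1 + K1 * (K2 * (2 - 2 + tail F v) + 1 * tail H v)) at_top"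
    unfolding U_def
    by (intro tendsto_intros shiftlim[OF hG] shiftlim[OF hH] qlim sub2)
  moreover have "c1 * 1 + c2 * 1 + K1 * (K2 * (2 - 2 + tail F v) + 1 * tail H v) < a"
    using v(1) d_def d by (simp add: algebra_simps)
  ultimately have evU: "eventually (\<lambda>x. U x < a) at_top" by (rule order_tendstoD(2))
  show "eventually (\<lambda>x. tail (conv G H) x / tail F x < a) at_top"
    using evU eventually_ge_at_top[of v]
  proof eventually_elim
    case (elim x)
    let ?M = "measure (F \<Otimes>\<^sub>M F) (Mset x v)"
    have ub: "tail (conv G H) x \<le> tail G (x - v) + tail H (x - v) + K1 * (K2 * ?M + tail F (x - v) * tail H v)"
      by (rule UB_ineq[OF nF nG nH v0 elim(2) K bG bH])
    have mb: "tail F x * (2 - tail F v) + ?M \<le> tail (conv F F) x"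
      by (rule MB_ineq[OF nF v0 elim(2)])
    have px: "0 < tail F x" "0 < tail F (x - v)" using pos by auto
    have "tail (conv G H) x / tail F x \<le> (tail G (x - v) + tail H (x - v) + K1 * (K2 * ?M + tail F (x - v) * tail H v)) / tail F x"
      using ub px by (intro divide_right_mono) auto
    also have "\<dots> = tail G (x - v) / tail F (x - v) * q x + tail H (x - v) / tail F (x - v) * q x
      + K1 * (K2 * (?M / tail F x) + q x * tail H v)"
      using px by (simp add: q_def field_simps)
    also have "?M / tail F x \<le> tail (conv F F) x / tail F x - 2 + tail F v"
    proof -
      have "?M / tail F x \<le> (tail (conv F F) x - tail F x * (2 - tail F v)) / tail F x"
        using mb px by (intro divide_right_mono) auto
      also have "\<dots> = tail (conv F F) x / tail F x - 2 + tail F v"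
        using px by (simp add: field_simps)
      finally show ?thesis .
    qed
    then have "tail G (x - v) / tail F (x - v) * q x + tail H (x - v) / tail F (x - v) * q x
      + K1 * (K2 * (?M / tail F x) + q x * tail H v) \<le> U x"
      unfolding U_def using K by (intro add_left_mono mult_left_mono add_right_mono) auto
    finally show ?case using elim(1) by linarith
  qed
qed



definition UU :: "(real ^ 'd) set \<Rightarrow> real ^ 'd \<Rightarrow> real set" where
  "UU A z = {u. 0 < u \<and> z \<in> (\<lambda>a. u *\<^sub>R a) ` A}"

lemma radial_sup_UU: "radial_sup A z = (if UU A z = {} then 0 else Sup (UU A z))"
  by (simp only: radial_sup_def UU_def)

lemma mem_scale: fixes A :: "(real ^ 'd) set" shows "0 < u \<Longrightarrow> z \<in> (\<lambda>a. u *\<^sub>R a) ` A \<longleftrightarrow> (1 / u) *\<^sub>R z \<in> A"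
proof
  assume u: "0 < u" "z \<in> (\<lambda>a. u *\<^sub>R a) ` A"
  then obtain a where a: "a \<in> A" "z = u *\<^sub>R a" by blast
  then have "(1 / u) *\<^sub>R z = ((1 / u) * u) *\<^sub>R a" by (simp only: a(2) scaleR_scaleR)
  also have "\<dots> = a" using u by simp
  finally have "(1 / u) *\<^sub>R z = a" .
  then show "(1 / u) *\<^sub>R z \<in> A" using a by simp
next
  assume u: "0 < u" "(1 / u) *\<^sub>R z \<in> A"
  have "z = u *\<^sub>R ((1 / u) *\<^sub>R z)" using u by simp
  then show "z \<in> (\<lambda>a. u *\<^sub>R a) ` A" using u by blast
qed

lemma UU_iff: "u \<in> UU A z \<longleftrightarrow> 0 < u \<and> (1 / u) *\<^sub>R z \<in> A"
  unfolding UU_def using mem_scale by blast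

context
  fixes A :: "(real ^ 'd) set"
  assumes cA: "class_R A"
begin

lemma A_open: "open A" using cA by (simp add: class_R_def)
lemma A_incr: "z \<in> A \<Longrightarrow> y \<in> orthant \<Longrightarrow> z + y \<in> A" using cA by (simp add: class_R_def increasing_set_def)
lemma A_conv: "convex (- A)" using cA by (simp add: class_R_def)
lemma A_0: "0 \<notin> closure A" using cA by (simp add: class_R_def)
lemma A_0': "0 \<notin> A" using A_0 closure_subset by blast

lemma star: assumes "a \<in> A" "1 \<le> t" shows "t *\<^sub>R a \<in> A"
proof (rule ccontr)
  assume n: "t *\<^sub>R a \<notin> A"
  have "(1 / t) *\<^sub>R (t *\<^sub>R a) + (1 - 1 / t) *\<^sub>R 0 \<in> - A"
    using A_0' n assms(2) by (intro convexD[OF A_conv]) auto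
  then show False using assms by simp
qed

lemma UU_down: assumes "u \<in> UU A z" "0 < u'" "u' \<le> u" shows "u' \<in> UU A z"
proof -
  have a: "(1 / u) *\<^sub>R z \<in> A" "0 < u" using assms UU_iff by blast+
  have "(u / u') *\<^sub>R ((1 / u) *\<^sub>R z) \<in> A" using star[OF a(1), of "u / u'"] assms by simp
  moreover have "(u / u') *\<^sub>R ((1 / u) *\<^sub>R z) = (1 / u') *\<^sub>R z" using assms a by simp
  ultimately show ?thesis using assms a by (simp add: UU_iff)
qed

lemma UU_bdd: "bdd_above (UU A z)"
proof -
  have "open (- closure A)" by auto
  then obtain e where e: "0 < e" "ball 0 e \<subseteq> - closure A" using A_0 open_contains_ball by blast
  have "\<forall>u\<in>UU A z. u \<le> norm z / e"
  proof
    fix u assume "u \<in> UU A z"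
    then have u: "0 < u" "(1 / u) *\<^sub>R z \<in> A" by (auto simp: UU_iff)
    then have "(1 / u) *\<^sub>R z \<notin> ball 0 e" using e closure_subset by blast
    then have "e \<le> norm z / u" using u by (simp add: dist_norm)
    then show "u \<le> norm z / e" using u e by (simp add: field_simps)
  qed
  then show ?thesis by (auto simp: bdd_above_def)
qed

lemma UU_up: assumes "u \<in> UU A z" shows "\<exists>u'>u. u' \<in> UU A z"
proof -
  have a: "(1 / u) *\<^sub>R z \<in> A" "0 < u" using assms UU_iff by blast+
  obtain e where e: "0 < e" "ball ((1 / u) *\<^sub>R z) e \<subseteq> A" using A_open a open_contains_ball by blast
  have "isCont (\<lambda>w. (1 / w) *\<^sub>R z) u" using a by (intro continuous_intros) auto
  then obtain d where d: "0 < d" "\<And>w. dist w u < d \<Longrightarrow> dist ((1 / w) *\<^sub>R z) ((1 / u) *\<^sub>R z) < e"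
    unfolding continuous_at_eps_delta using e by blast
  let ?w = "u + d / 2"
  have "dist ?w u < d" using d by (simp add: dist_real_def)
  then have "dist ((1 / ?w) *\<^sub>R z) ((1 / u) *\<^sub>R z) < e" by (rule d(2))
  then have "(1 / ?w) *\<^sub>R z \<in> ball ((1 / u) *\<^sub>R z) e" by (simp add: dist_commute)
  then have "(1 / ?w) *\<^sub>R z \<in> A" using e by blast
  then show ?thesis using a d by (intro exI[of _ ?w]) (auto simp: UU_iff)
qed

lemma R_char: assumes "0 < x" shows "x < radial_sup A z \<longleftrightarrow> z \<in> (\<lambda>a. x *\<^sub>R a) ` A"
proof
  assume h: "x < radial_sup A z"
  then have ne: "UU A z \<noteq> {}" using assms by (auto simp: radial_sup_UU split: if_splits)
  then have "x < Sup (UU A z)" using h by (simp add: radial_sup_UU)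
  then obtain u where "u \<in> UU A z" "x < u" using less_cSup_iff[OF ne UU_bdd] by blast
  then have "x \<in> UU A z" using UU_down assms by auto
  then show "z \<in> (\<lambda>a. x *\<^sub>R a) ` A" by (simp add: UU_def)
next
  assume "z \<in> (\<lambda>a. x *\<^sub>R a) ` A"
  then have "x \<in> UU A z" using assms by (simp add: UU_def)
  then obtain u' where u': "u' > x" "u' \<in> UU A z" using UU_up by blast
  then have "u' \<le> Sup (UU A z)" using UU_bdd by (intro cSup_upper)
  then show "x < radial_sup A z" using u' by (auto simp: radial_sup_UU)
qed

lemma R_nonneg: "0 \<le> radial_sup A z"
proof (cases "UU A z = {}")
  case False
  then obtain u where "u \<in> UU A z" by blast
  moreover then have "0 < u" by (simp add: UU_iff)
  ultimately have "0 < Sup (UU A z)" using UU_bdd by (meson cSup_upper less_le_trans)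
  then show ?thesis using False by (simp add: radial_sup_UU)
qed (simp add: radial_sup_UU)

lemma R_pos: "0 < radial_sup A z \<longleftrightarrow> (\<exists>u>0. z \<in> (\<lambda>a. u *\<^sub>R a) ` A)"
proof
  assume "0 < radial_sup A z"
  then have "UU A z \<noteq> {}" by (auto simp: radial_sup_UU split: if_splits)
  then show "\<exists>u>0. z \<in> (\<lambda>a. u *\<^sub>R a) ` A" by (auto simp: UU_def)
next
  assume "\<exists>u>0. z \<in> (\<lambda>a. u *\<^sub>R a) ` A"
  then obtain u where "0 < u" "z \<in> (\<lambda>a. u *\<^sub>R a) ` A" by blast
  then have "u \<in> UU A z" by (simp add: UU_def)
  then have "0 < Sup (UU A z)" "UU A z \<noteq> {}" using UU_bdd \<open>0 < u\<close> by (auto intro: less_le_trans cSup_upper)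
  then show "0 < radial_sup A z" by (simp add: radial_sup_UU)
qed

lemma R_meas: "radial_sup A \<in> borel_measurable borel"
  unfolding borel_measurable_iff_greater
proof
  fix a :: real
  consider "a < 0" | "a = 0" | "0 < a" by linarith
  then show "{w \<in> space borel. a < radial_sup A w} \<in> sets borel"
  proof cases
    case 1
    then have "{w \<in> space borel. a < radial_sup A w} = UNIV" using R_nonneg by (auto intro: less_le_trans)
    then show ?thesis by simp
  next
    case 2
    then have "{w \<in> space borel. a < radial_sup A w} = (\<Union>u\<in>{0<..}. (\<lambda>x. u *\<^sub>R x) ` A)"
      using R_pos by auto
    moreover have "open (\<Union>u\<in>{0<..}. (\<lambda>x. u *\<^sub>R x) ` A)" using A_open by (intro open_UN) auto
    ultimately show ?thesis by simp
  next
    case 3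
    then have "{w \<in> space borel. a < radial_sup A w} = (\<lambda>x. a *\<^sub>R x) ` A" using R_char by auto
    moreover have "open ((\<lambda>x. a *\<^sub>R x) ` A)" using A_open 3 by auto
    ultimately show ?thesis by simp
  qed
qed

lemma R_subadd: "radial_sup A (z1 + z2) \<le> radial_sup A z1 + radial_sup A z2"
proof (rule field_le_epsilon)
  fix e :: real assume e: "0 < e"
  define a where "a = radial_sup A z1 + e / 2"
  define b where "b = radial_sup A z2 + e / 2"
  have ab: "0 < a" "0 < b" using e R_nonneg[of z1] R_nonneg[of z2] by (auto simp: a_def b_def)
  have "z1 \<notin> (\<lambda>x. a *\<^sub>R x) ` A" using R_char[OF ab(1), of z1] e by (simp add: a_def)
  then have n1: "(1 / a) *\<^sub>R z1 \<in> - A" using mem_scale[OF ab(1), of z1 A] by simp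
  have "z2 \<notin> (\<lambda>x. b *\<^sub>R x) ` A" using R_char[OF ab(2), of z2] e by (simp add: b_def)
  then have n2: "(1 / b) *\<^sub>R z2 \<in> - A" using mem_scale[OF ab(2), of z2 A] by simp
  have "(a / (a + b)) *\<^sub>R ((1 / a) *\<^sub>R z1) + (b / (a + b)) *\<^sub>R ((1 / b) *\<^sub>R z2) \<in> - A"
    using ab by (intro convexD[OF A_conv n1 n2]) (simp_all add: add_divide_distrib[symmetric])
  moreover have "(a / (a + b)) *\<^sub>R ((1 / a) *\<^sub>R z1) + (b / (a + b)) *\<^sub>R ((1 / b) *\<^sub>R z2) = (1 / (a + b)) *\<^sub>R (z1 + z2)"
    using ab by (simp add: scaleR_add_right)
  ultimately have "z1 + z2 \<notin> (\<lambda>x. (a + b) *\<^sub>R x) ` A" using mem_scale[of "a + b" "z1 + z2" A] ab by simp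
  then have "\<not> (a + b < radial_sup A (z1 + z2))" using R_char[of "a + b"] ab by simp
  then show "radial_sup A (z1 + z2) \<le> radial_sup A z1 + radial_sup A z2 + e" by (simp add: a_def b_def)
qed

lemma R_mono: assumes "z2 \<in> orthant" shows "radial_sup A z1 \<le> radial_sup A (z1 + z2)"
proof (rule ccontr)
  assume h: "\<not> ?thesis"
  define x where "x = (radial_sup A (z1 + z2) + radial_sup A z1) / 2"
  have x: "0 < x" "x < radial_sup A z1" "radial_sup A (z1 + z2) < x"
    using h R_nonneg[of "z1 + z2"] by (auto simp: x_def)
  then have "(1 / x) *\<^sub>R z1 \<in> A" using R_char mem_scale by blast
  moreover have "(1 / x) *\<^sub>R z2 \<in> orthant" using assms x by (simp add: orthant_def)
  ultimately have "(1 / x) *\<^sub>R z1 + (1 / x) *\<^sub>R z2 \<in> A" by (rule A_incr)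
  then have "z1 + z2 \<in> (\<lambda>a. x *\<^sub>R a) ` A" using mem_scale[OF x(1), of "z1 + z2" A] by (simp add: scaleR_add_right)
  then have "x < radial_sup A (z1 + z2)" using R_char[OF x(1), of "z1 + z2"] by simp
  then show False using x(3) by linarith
qed

end



lemma rect_gen: assumes "prob_space M" "prob_space N" "A \<in> sets M" "B \<in> sets N"
  shows "measure (M \<Otimes>\<^sub>M N) (A \<times> B) = measure M A * measure N B"
proof -
  interpret N: prob_space N by fact
  show ?thesis using N.emeasure_pair_measure_Times[of A M B] assms
    by (simp add: measure_def enn2real_mult)
qed

lemma space_borelV: "sets V = sets (borel :: ('a::topological_space) measure) \<Longrightarrow> space V = UNIV"
  using sets_eq_imp_space_eq by force

lemma R_meas_V: "class_R A \<Longrightarrow> sets V = sets borel \<Longrightarrow> radial_sup A \<in> borel_measurable V"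
  using R_meas[of A] measurable_cong_sets[of V borel borel borel] by simp

lemma tail_VA: assumes "class_R A" "sets V = sets borel"
  shows "tail (V_A A V) x = measure V {z. x < radial_sup A z}"
  unfolding tail_def V_A_def
  by (subst measure_distr[OF R_meas_V[OF assms]]) (auto simp: space_borelV[OF assms(2)] intro!: arg_cong[where f="measure V"])

lemma tail_VA_scaled: assumes "class_R A" "sets V = sets borel" "0 < x"
  shows "tail (V_A A V) x = measure V ((\<lambda>a. x *\<^sub>R a) ` A)"
  using tail_VA[OF assms(1,2)] R_char[OF assms(1,3)] by simp

lemma nice_VA: assumes "class_R A" "prob_space V" "sets V = sets borel" shows "nice (V_A A V)"
proof -
  have "prob_space (V_A A V)" unfolding V_A_def
    by (rule prob_space.prob_space_distr[OF assms(2) R_meas_V[OF assms(1,3)]])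
  moreover have "emeasure (V_A A V) {..<0} = 0" unfolding V_A_def
  proof -
    have "radial_sup A -` {..<0} \<inter> space V = {}" by (auto simp: leD[OF R_nonneg[OF assms(1)]])
    then show "emeasure (distr V borel (radial_sup A)) {..<0} = 0"
      by (subst emeasure_distr[OF R_meas_V[OF assms(1,3)]]) auto
  qed
  ultimately show ?thesis by (simp add: nice_def V_A_def)
qed

lemma sum_meas_vec: assumes "sets V1 = sets borel" "sets V2 = sets borel"
  shows "(\<lambda>(x, y). x + y) \<in> measurable (V1 \<Otimes>\<^sub>M V2) (borel :: ('a::euclidean_space) measure)"
proof -
  have "sets (V1 \<Otimes>\<^sub>M V2) = sets (borel \<Otimes>\<^sub>M borel :: ('a \<times> 'a) measure)"
    using assms by (simp cong: sets_pair_measure_cong)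
  then show ?thesis by (subst measurable_cong_sets[OF _ refl]) (assumption, measurable)
qed

lemma RR_meas: assumes "class_R A" "sets V1 = sets borel" "sets V2 = sets borel"
  shows "(\<lambda>(a, b). (radial_sup A a, radial_sup A b)) \<in> measurable (V1 \<Otimes>\<^sub>M V2) (borel \<Otimes>\<^sub>M borel)"
proof -
  have [measurable]: "radial_sup A \<in> borel_measurable borel" by (rule R_meas[OF assms(1)])
  have "sets (V1 \<Otimes>\<^sub>M V2) = sets (borel \<Otimes>\<^sub>M borel :: ((real^'a) \<times> (real^'a)) measure)"
    using assms by (simp cong: sets_pair_measure_cong)
  then show ?thesis by (subst measurable_cong_sets[OF _ refl]) (assumption, measurable)
qed

lemma orthant_borel: "orthant \<in> sets borel"
  using closed_positive_orthant by (simp add: orthant_def)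

lemma orthant_one: "distr_orthant V \<Longrightarrow> measure V orthant = 1"
proof -
  assume d: "distr_orthant V"
  interpret prob_space V using d by (simp add: distr_orthant_def)
  have s: "sets V = sets borel" using d by (simp add: distr_orthant_def)
  have "measure V (space V - orthant) = measure V (space V) - measure V orthant"
    using s orthant_borel by (intro finite_measure_compl) simp
  moreover have "space V - orthant = - orthant" using space_borelV[OF s] by auto
  moreover have "measure V (- orthant) = 0" using d by (simp add: distr_orthant_def measure_def)
  ultimately show ?thesis using prob_space by simp
qed

lemma W_bounds:
  assumes cA: "class_R A" and d1: "distr_orthant V1" and d2: "distr_orthant V2"
  shows "tail (V_A A V1) x \<le> tail (V_A A (conv V1 V2)) x"
    and "tail (V_A A (conv V1 V2)) x \<le> tail (conv (V_A A V1) (V_A A V2)) x"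
proof -
  have s1: "sets V1 = sets borel" and s2: "sets V2 = sets borel" and p1: "prob_space V1" and p2: "prob_space V2"
    using d1 d2 by (simp_all add: distr_orthant_def)
  interpret P: pair_prob_space V1 V2 using p1 p2 by (simp add: pair_prob_space_def pair_sigma_finite_def prob_space_imp_sigma_finite)
  have sc: "sets (conv V1 V2) = sets borel" by (simp add: conv_def)
  have sp: "space (V1 \<Otimes>\<^sub>M V2) = UNIV" by (simp add: space_pair_measure space_borelV[OF s1] space_borelV[OF s2])
  have Rb: "{z. x < radial_sup A z} \<in> sets borel"
    using R_meas[OF cA] unfolding borel_measurable_iff_greater by simp
  define B where "B = {p. x < radial_sup A (fst p + snd p)}"
  have Bs: "B \<in> sets (V1 \<Otimes>\<^sub>M V2)"
  proof -
    have "{z. x < radial_sup A z} \<in> sets borel"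
      using R_meas[OF cA] unfolding borel_measurable_iff_greater by simp
    then have "(\<lambda>(a, b). a + b) -` {z. x < radial_sup A z} \<inter> space (V1 \<Otimes>\<^sub>M V2) \<in> sets (V1 \<Otimes>\<^sub>M V2)"
      by (intro measurable_sets[OF sum_meas_vec[OF s1 s2]]) auto
    moreover have "(\<lambda>(a, b). a + b) -` {z. x < radial_sup A z} \<inter> space (V1 \<Otimes>\<^sub>M V2) = B"
      using sp by (auto simp: B_def)
    ultimately show ?thesis by simp
  qed
  have Wt: "tail (V_A A (conv V1 V2)) x = measure (V1 \<Otimes>\<^sub>M V2) B"
    unfolding tail_VA[OF cA sc] unfolding conv_def
    by (subst measure_distr[OF sum_meas_vec[OF s1 s2]]) (auto simp: sp B_def Rb intro!: arg_cong[where f="measure _"])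
  have Rs: "{z. x < radial_sup A z} \<in> sets V1"
    using R_meas[OF cA] s1 unfolding borel_measurable_iff_greater by simp
  have "tail (V_A A V1) x = measure V1 {z. x < radial_sup A z} * measure V2 orthant"
    using tail_VA[OF cA s1] orthant_one[OF d2] by simp
  also have "\<dots> = measure (V1 \<Otimes>\<^sub>M V2) ({z. x < radial_sup A z} \<times> orthant)"
    using Rs orthant_borel s2 by (intro rect_gen[symmetric] p1 p2) auto
  also have "\<dots> \<le> measure (V1 \<Otimes>\<^sub>M V2) B"
    using Bs R_mono[OF cA] by (intro P.P.finite_measure_mono) (auto simp: B_def intro: less_le_trans)
  finally show "tail (V_A A V1) x \<le> tail (V_A A (conv V1 V2)) x" using Wt by simp
  define f where "f = (\<lambda>(a, b). (radial_sup A a, radial_sup A b))"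
  have fm: "f \<in> measurable (V1 \<Otimes>\<^sub>M V2) (borel \<Otimes>\<^sub>M borel)" unfolding f_def by (rule RR_meas[OF cA s1 s2])
  have nF: "nice (V_A A V1)" and nG: "nice (V_A A V2)" using nice_VA cA p1 p2 s1 s2 by blast+
  have "V_A A V1 \<Otimes>\<^sub>M V_A A V2 = distr (V1 \<Otimes>\<^sub>M V2) (borel \<Otimes>\<^sub>M borel) f"
    unfolding V_A_def f_def
    by (rule pair_measure_distr[OF R_meas_V[OF cA s1] R_meas_V[OF cA s2]])
       (use nG in \<open>simp add: V_A_def nice_def prob_space_imp_sigma_finite\<close>)
  then have "tail (conv (V_A A V1) (V_A A V2)) x = measure (distr (V1 \<Otimes>\<^sub>M V2) (borel \<Otimes>\<^sub>M borel) f) {p. x < fst p + snd p}"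
    using conv_tail[OF nF nG] by simp
  also have "\<dots> = measure (V1 \<Otimes>\<^sub>M V2) (f -` {p. x < fst p + snd p} \<inter> space (V1 \<Otimes>\<^sub>M V2))"
    by (rule measure_distr[OF fm sumset])
  finally have ct: "tail (conv (V_A A V1) (V_A A V2)) x = measure (V1 \<Otimes>\<^sub>M V2) (f -` {p. x < fst p + snd p} \<inter> space (V1 \<Otimes>\<^sub>M V2))" .
  have "measure (V1 \<Otimes>\<^sub>M V2) B \<le> measure (V1 \<Otimes>\<^sub>M V2) (f -` {p. x < fst p + snd p} \<inter> space (V1 \<Otimes>\<^sub>M V2))"
  proof (intro P.P.finite_measure_mono measurable_sets[OF fm sumset])
    show "B \<subseteq> f -` {p. x < fst p + snd p} \<inter> space (V1 \<Otimes>\<^sub>M V2)"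
      using R_subadd[OF cA] sp by (auto simp: B_def f_def intro: less_le_trans)
  qed
  then show "tail (V_A A (conv V1 V2)) x \<le> tail (conv (V_A A V1) (V_A A V2)) x" using Wt ct by simp
qed



lemma asym_to_lim:
  fixes f g :: "real \<Rightarrow> real"
  assumes g: "\<And>x. g x \<noteq> 0" and c: "c \<noteq> 0" and h: "f \<sim>[at_top] (\<lambda>x. c * g x)"
  shows "((\<lambda>x. f x / g x) \<longlongrightarrow> c) at_top"
proof -
  have "((\<lambda>x. if f x = 0 \<and> c * g x = 0 then 1 else f x / (c * g x)) \<longlongrightarrow> 1) at_top"
    using asymp_equivD[OF h] .
  moreover have "(\<lambda>x. if f x = 0 \<and> c * g x = 0 then 1 else f x / (c * g x)) = (\<lambda>x. f x / (c * g x))"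
    using g c by auto
  ultimately have "((\<lambda>x. c * (f x / (c * g x))) \<longlongrightarrow> c * 1) at_top"
    by (intro tendsto_mult tendsto_const) auto
  moreover have "(\<lambda>x. c * (f x / (c * g x))) = (\<lambda>x. f x / g x)" using c by auto
  ultimately show ?thesis by simp
qed

lemma lim_to_asym:
  fixes f g :: "real \<Rightarrow> real"
  assumes g: "\<And>x. g x \<noteq> 0" and c: "c \<noteq> 0" and h: "((\<lambda>x. f x / g x) \<longlongrightarrow> c) at_top"
  shows "f \<sim>[at_top] (\<lambda>x. c * g x)"
proof (rule asymp_equivI')
  have "((\<lambda>x. (f x / g x) / c) \<longlongrightarrow> c / c) at_top" using h c by (intro tendsto_intros) auto
  moreover have "(\<lambda>x. (f x / g x) / c) = (\<lambda>x. f x / (c * g x))" by (auto simp: field_simps)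
  ultimately show "((\<lambda>x. f x / (c * g x)) \<longlongrightarrow> 1) at_top" using c by simp
qed

theorem lemma3p4:
  fixes A :: "(real ^ 'd) set" and V1 V2 :: "(real ^ 'd) measure"
  assumes "class_R A"
    and "distr_orthant V1" and "distr_orthant V2"
    and "S_A A V1"
    and "(\<lambda>x. measure V2 ((\<lambda>a. x *\<^sub>R a) ` A)) \<in> o[at_top](\<lambda>x. measure V1 ((\<lambda>a. x *\<^sub>R a) ` A))"
  shows "(\<lambda>x. measure (conv V1 V2) ((\<lambda>a. x *\<^sub>R a) ` A)) \<sim>[at_top] (\<lambda>x. measure V1 ((\<lambda>a. x *\<^sub>R a) ` A))
         \<and> S_A A (conv V1 V2)"
proof -
  note cA = assms(1) and d1 = assms(2) and d2 = assms(3)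
  define F where "F = V_A A V1"
  define G where "G = V_A A V2"
  define W where "W = V_A A (conv V1 V2)"
  have s1: "sets V1 = sets borel" and s2: "sets V2 = sets borel" and p1: "prob_space V1" and p2: "prob_space V2"
    using d1 d2 by (simp_all add: distr_orthant_def)
  have sub: "subexponential F" using assms(4) by (simp add: S_A_def F_def)
  have nF: "nice F" using sub by (simp add: subexponential_def nice_def)
  have pos: "\<And>x. 0 < tail F x" using sub by (simp add: subexponential_def)
  have nG: "nice G" unfolding G_def by (rule nice_VA[OF cA p2 s2])
  have sub2: "((\<lambda>x. tail (conv F F) x / tail F x) \<longlongrightarrow> 2) at_top"
  proof -
    have "\<forall>n\<ge>2. (\<lambda>x. tail (conv_pow F n) x) \<sim>[at_top] (\<lambda>x. real n * tail F x)"
      using sub unfolding subexponential_def by blast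
    then have "(\<lambda>x. tail (conv_pow F 2) x) \<sim>[at_top] (\<lambda>x. real 2 * tail F x)"
      by blast
    moreover have "conv_pow F 2 = conv F F" using conv_return[OF nF] by (simp add: numeral_2_eq_2)
    ultimately have "(\<lambda>x. tail (conv F F) x) \<sim>[at_top] (\<lambda>x. 2 * tail F x)" by simp
    then show ?thesis using pos by (intro asym_to_lim) (auto simp: less_imp_neq[symmetric])
  qed
  have hG: "((\<lambda>x. tail G x / tail F x) \<longlongrightarrow> 0) at_top"
  proof -
    have "((\<lambda>x. measure V2 ((\<lambda>a. x *\<^sub>R a) ` A) / measure V1 ((\<lambda>a. x *\<^sub>R a) ` A)) \<longlongrightarrow> 0) at_top"
      by (rule smalloD_tendsto[OF assms(5)])
    moreover have "eventually (\<lambda>x. measure V2 ((\<lambda>a. x *\<^sub>R a) ` A) / measure V1 ((\<lambda>a. x *\<^sub>R a) ` A) = tail G x / tail F x) at_top"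
      using eventually_gt_at_top[of 0]
      by eventually_elim (simp add: F_def G_def tail_VA_scaled[OF cA s1] tail_VA_scaled[OF cA s2])
    ultimately show ?thesis by (rule Lim_transform_eventually)
  qed
  have hF: "((\<lambda>x. tail F x / tail F x) \<longlongrightarrow> 1) at_top"
    using pos by (simp add: less_imp_neq[symmetric])
  have up: "((\<lambda>x. tail (conv F G) x / tail F x) \<longlongrightarrow> 1 + 0) at_top"
    by (rule KEY[OF nF pos sub2 nF nG _ _ hF hG]) auto
  have Wb1: "\<And>x. tail F x \<le> tail W x" and Wb2: "\<And>x. tail W x \<le> tail (conv F G) x"
    unfolding F_def G_def W_def using W_bounds[OF cA d1 d2] by auto
  have Wlim: "((\<lambda>x. tail W x / tail F x) \<longlongrightarrow> 1) at_top"
  proof (rule tendsto_sandwich[OF _ _ tendsto_const])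
    show "eventually (\<lambda>x. 1 \<le> tail W x / tail F x) at_top"
      using pos Wb1 by (auto simp: le_divide_eq)
    show "eventually (\<lambda>x. tail W x / tail F x \<le> tail (conv F G) x / tail F x) at_top"
      using pos Wb2 by (intro always_eventually allI divide_right_mono) (auto intro: less_imp_le)
    show "((\<lambda>x. tail (conv F G) x / tail F x) \<longlongrightarrow> 1) at_top" using up by simp
  qed
  have sc: "sets (conv V1 V2) = sets borel" by (simp add: conv_def)
  have pc: "prob_space (conv V1 V2)" unfolding conv_def
    by (rule prob_space.prob_space_distr[OF prob_space_pair[OF p1 p2] sum_meas_vec[OF s1 s2]])
  have nW: "nice W" unfolding W_def by (rule nice_VA[OF cA pc sc])
  have posW: "\<And>x. 0 < tail W x" using pos Wb1 by (meson less_le_trans)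
  have part1: "(\<lambda>x. measure (conv V1 V2) ((\<lambda>a. x *\<^sub>R a) ` A)) \<sim>[at_top] (\<lambda>x. measure V1 ((\<lambda>a. x *\<^sub>R a) ` A))"
  proof -
    have "tail W \<sim>[at_top] (\<lambda>x. 1 * tail F x)"
      using pos by (intro lim_to_asym Wlim) (auto simp: less_imp_neq[symmetric])
    then have "tail W \<sim>[at_top] tail F" by simp
    moreover have e1: "eventually (\<lambda>x. tail W x = measure (conv V1 V2) ((\<lambda>a. x *\<^sub>R a) ` A)) at_top"
      using eventually_gt_at_top[of 0] by eventually_elim (simp add: W_def tail_VA_scaled[OF cA sc])
    moreover have e2: "eventually (\<lambda>x. tail F x = measure V1 ((\<lambda>a. x *\<^sub>R a) ` A)) at_top"
      using eventually_gt_at_top[of 0] by eventually_elim (simp add: F_def tail_VA_scaled[OF cA s1])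
    ultimately show ?thesis using asymp_equiv_cong[OF e1 e2] by simp
  qed
  have ind: "nice (conv_pow W (Suc m)) \<and> ((\<lambda>x. tail (conv_pow W (Suc m)) x / tail F x) \<longlongrightarrow> real (Suc m)) at_top" for m
  proof (induction m)
    case 0
    then show ?case using conv_return[OF nW] nW Wlim by simp
  next
    case (Suc m)
    have "((\<lambda>x. tail (conv W (conv_pow W (Suc m))) x / tail F x) \<longlongrightarrow> 1 + real (Suc m)) at_top"
      using Suc by (intro KEY[OF nF pos sub2 nW _ _ _ Wlim]) auto
    moreover have "1 + real (Suc m) = real (Suc (Suc m))" by simp
    ultimately show ?case using Suc nice_conv[OF nW] by (simp only: conv_pow.simps)
  qed
  have part2: "subexponential W"
    unfolding subexponential_def
  proof (intro conjI allI impI)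
    show "prob_space W" "sets W = sets borel" "emeasure W {..<0} = 0" using nW by (simp_all add: nice_def)
    show "\<And>x. 0 < tail W x" by (rule posW)
    fix n :: nat assume n: "2 \<le> n"
    then obtain m where m: "n = Suc m" by (cases n) auto
    have "((\<lambda>x. (tail (conv_pow W n) x / tail F x) / (tail W x / tail F x)) \<longlongrightarrow> real n / 1) at_top"
      using ind[of m] m Wlim by (intro tendsto_intros) auto
    moreover have "(\<lambda>x. (tail (conv_pow W n) x / tail F x) / (tail W x / tail F x)) = (\<lambda>x. tail (conv_pow W n) x / tail W x)"
      using pos by (auto simp: field_simps less_imp_neq[symmetric])
    ultimately have "((\<lambda>x. tail (conv_pow W n) x / tail W x) \<longlongrightarrow> real n) at_top" by simp
    then show "(\<lambda>x. tail (conv_pow W n) x) \<sim>[at_top] (\<lambda>x. real n * tail W x)"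
      using posW n by (intro lim_to_asym) (auto simp: less_imp_neq[symmetric])
  qed
  show ?thesis using part1 part2 by (simp add: S_A_def W_def)
qed

end
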